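(* Let $k$ be a positive integer and let $G$ be a multigraph with $|E(G)|\ge 42k\log k$ and minimum degree $\delta(G)\ge 3$. Then $G$ contains $k$ edge-disjoint cycles.
   Context: Logarithms are to base $2$. Multigraphs may have parallel edges (two parallel edges form a cycle of length $2$). *)

theory Defs
  imports Complex_Main
begin

text \<open>Parallel edges are distinct edge identifiers with equal ends.\<close>

definition multigraph :: "'v set \<Rightarrow> 'e set \<Rightarrow> ('e \<Rightarrow> 'v set) \<Rightarrow> bool" where
  "multigraph V E ends \<longleftrightarrow> finite V \<and> V \<noteq> {} \<and> finite E \<and>
     (\<forall>e\<in>E. ends e \<subseteq> V \<and> card (ends e) = 2)"

definition degree :: "'e set \<Rightarrow> ('e \<Rightarrow> 'v set) \<Rightarrow> 'v \<Rightarrow> nat" where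
  "degree E ends v = card {e\<in>E. v \<in> ends e}"

definition min_degree_ge :: "'v set \<Rightarrow> 'e set \<Rightarrow> ('e \<Rightarrow> 'v set) \<Rightarrow> nat \<Rightarrow> bool" where
  "min_degree_ge V E ends d \<longleftrightarrow> (\<forall>v\<in>V. d \<le> degree E ends v)"

text \<open>For n = 2 this is a pair of parallel edges.\<close>

definition is_cycle :: "'e set \<Rightarrow> ('e \<Rightarrow> 'v set) \<Rightarrow> 'e set \<Rightarrow> bool" where
  "is_cycle E ends C \<longleftrightarrow> (\<exists>vs es. length vs = length es \<and> length vs \<ge> 2 \<and>
      distinct vs \<and> distinct es \<and> set es \<subseteq> E \<and> C = set es \<and>
      (\<forall>i < length es. ends (es ! i) = {vs ! i, vs ! ((i + 1) mod length vs)}))"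

end

theory Submission
  imports Defs
begin

lemma step7: "(R::nat) \<ge> 8 \<Longrightarrow> (R+2)^7 \<le> 64 * (R+1)^7"
proof -
  assume R: "R \<ge> 8"
  have "9*(R+2) \<le> 10*(R+1)" using R by simp
  then have "(9*(R+2))^7 \<le> (10*(R+1))^7" by (rule power_mono) simp
  then have "9^7 * (R+2)^7 \<le> 10^7 * (R+1)^7" by (simp only: power_mult_distrib)
  also have "\<dots> \<le> (64 * 9^7) * (R+1)^7" by (rule mult_right_mono) simp_all
  finally have "9^7 * (R+2)^7 \<le> 9^7 * (64 * (R+1)^7)" by (simp add: ac_simps)
  then show ?thesis by simp
qed

lemma big8: "(R::nat) \<ge> 8 \<Longrightarrow> 2^22 * (R+1)^7 \<le> 2^(6*R)"
proof (induction R rule: nat_induct_at_least)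
  case base then show ?case by simp
next
  case (Suc R)
  have "2^22 * (Suc R + 1)^7 = 2^22 * (R+2)^7" by simp
  also have "\<dots> \<le> 2^22 * (64 * (R+1)^7)" using step7[OF Suc(1)] by simp
  also have "\<dots> = 64 * (2^22 * (R+1)^7)" by simp
  also have "\<dots> \<le> 64 * 2^(6*R)" using Suc(2) by simp
  also have "\<dots> = 2^(6 * Suc R)" by (simp add: power_add)
  finally show ?case .
qed

lemma arith:
  fixes k m n R :: nat
  assumes k: "k \<ge> 1" and n: "n \<ge> 1" and mn: "3*n \<le> 2*m"
    and lg: "real m \<ge> 42 * real k * log 2 (real k)" and R: "2^R \<le> 2*n"
  shows "(k-1)*(2*R+2) + 1 \<le> m - n"
proof (rule ccontr)
  assume neg: "\<not> ?thesis"
  define s where "s = m - n"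
  have s1: "2*s \<ge> n" "3*s \<ge> m" using mn s_def by auto
  have sle: "s \<le> (k-1)*(2*R+2)" using neg s_def by simp
  have k2: "k \<ge> 2"
  proof (rule ccontr)
    assume "\<not> k \<ge> 2" then have "k = 1" using k by simp
    then show False using sle s1 n by simp
  qed
  have "real m \<le> real (3*s)" using s1(2) by (simp only: of_nat_le_iff)
  then have "real m \<le> 3 * real s" by simp
  then have rs: "real s \<ge> 14 * real k * log 2 (real k)" using lg by linarith
  have "real s \<le> real ((k-1)*(2*R+2))" using sle by linarith
  also have "\<dots> < real (k*(2*R+2))"
  proof -
    have "(k-1)*(2*R+2) < k*(2*R+2)" using k2 by (intro mult_strict_right_mono) auto
    then show ?thesis by (simp only: of_nat_less_iff)
  qed
  also have "\<dots> = real k * (2*R+2)" by (simp add: algebra_simps)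
  finally have "14 * real k * log 2 (real k) < real k * (2*R+2)" using rs by linarith
  then have "14 * log 2 (real k) < 2*R+2" using k2 by (simp add: mult.commute mult.left_commute)
  then have l7: "log 2 (real (k^7)) < real (R+1)" using k2 by (simp add: log_nat_power)
  have "real (k^7) < 2 powr real (R+1)" using l7 k2 by (subst log_less_iff[symmetric]) auto
  moreover have "2 powr real (R+1) = (2::real)^(R+1)" by (rule powr_realpow) simp
  ultimately have "real (k^7) < real (2^(R+1))" by simp
  then have k7: "k^7 < 2^(R+1)" by linarith
  have "2^R \<le> 4*s" using R s1 by simp
  also have "\<dots> \<le> 4*((k-1)*(2*R+2))" using sle by simp
  also have "\<dots> < 8*k*(R+1)" using k2 by (simp add: algebra_simps)
  finally have p: "2^R < 8*k*(R+1)" .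
  then have "(2^R)^7 < (8*k*(R+1))^7" by (rule power_strict_mono) simp_all
  also have "\<dots> = 8^7 * (R+1)^7 * k^7" by (simp only: power_mult_distrib mult.commute mult.left_commute)
  also have "\<dots> < 8^7 * (R+1)^7 * 2^(R+1)" using k7 by simp
  finally have "2^R * 2^(6*R) < 2^R * (2^22 * (R+1)^7)"
    by (simp add: power_mult[symmetric] power_add[symmetric] algebra_simps)
  then have q: "2^(6*R) < 2^22 * (R+1)^7" by simp
  have R7: "R \<le> 7"
  proof (rule ccontr)
    assume "\<not> R \<le> 7" then have "R \<ge> 8" by simp
    then show False using q big8[of R] by simp
  qed
  have "(2::nat)^(R+1) \<le> 2^8" by (rule power_increasing) (use R7 in simp_all)
  then have k8: "k^7 < 2^8" using k7 by linarith
  have "k < 3"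
  proof (rule ccontr)
    assume "\<not> k < 3" then have "3 \<le> k" by simp
    then have "3^7 \<le> k^7" by (rule power_mono) simp
    then show False using k8 by simp
  qed
  then have "k = 2" using k2 by simp
  then show False using rs sle R7 by simp
qed

locale mgr =
  fixes E :: "'e set" and ends :: "'e \<Rightarrow> 'v set"
  assumes finE: "finite E" and two: "\<And>e. e \<in> E \<Longrightarrow> card (ends e) = 2"
begin

definition walk :: "'e set \<Rightarrow> 'v list \<Rightarrow> 'e list \<Rightarrow> bool" where
  "walk H xs es \<longleftrightarrow> length xs = Suc (length es) \<and> set es \<subseteq> H \<and>
     (\<forall>i<length es. ends (es!i) = {xs!i, xs!Suc i})"

definition nb :: "'e list \<Rightarrow> bool" where
  "nb es \<longleftrightarrow> (\<forall>i. Suc i < length es \<longrightarrow> es!i \<noteq> es!Suc i)"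

lemma ends_neq: "e \<in> E \<Longrightarrow> ends e = {a,b} \<Longrightarrow> a \<noteq> b"
  using two[of e] by auto

lemma closed_cycle:
  assumes H: "H \<subseteq> E" and w: "walk H xs es" and n: "nb es" and L: "length es = L" "L \<ge> 1"
    and cl: "xs!0 = xs!L" and d: "distinct (take L xs)"
  shows "is_cycle E ends (set es)"
proof -
  define vs where "vs = take L xs"
  have lx: "length xs = Suc L" using w L by (simp add: walk_def)
  have lvs: "length vs = L" using lx by (simp add: vs_def)
  have vsn: "\<And>i. i < L \<Longrightarrow> vs!i = xs!i" by (simp add: vs_def)
  have sE: "set es \<subseteq> E" using w H by (auto simp: walk_def)
  have ed: "\<And>i. i < L \<Longrightarrow> ends (es!i) = {xs!i, xs!Suc i}" using w L by (simp add: walk_def)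
  have esE: "\<And>i. i < L \<Longrightarrow> es!i \<in> E" using sE L by auto
  have L2: "L \<ge> 2"
  proof (rule ccontr)
    assume "\<not> L \<ge> 2" then have "L = 1" using L by simp
    then have "ends (es!0) = {xs!0, xs!1}" using ed[of 0] by simp
    then have "xs!0 \<noteq> xs!1" using ends_neq esE[of 0] \<open>L = 1\<close> by simp
    then show False using cl \<open>L = 1\<close> by simp
  qed
  have ed2: "\<And>i. i < L \<Longrightarrow> ends (es!i) = {vs!i, vs!((i+1) mod L)}"
  proof -
    fix i assume i: "i < L"
    show "ends (es!i) = {vs!i, vs!((i+1) mod L)}"
    proof (cases "i + 1 < L")
      case True then show ?thesis using ed[OF i] vsn i by simp
    next
      case False then have "i + 1 = L" using i by simp
      then show ?thesis using ed[OF i] vsn i cl L2 by simp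
    qed
  qed
  have des: "distinct es"
  proof (rule ccontr)
    assume "\<not> distinct es"
    then obtain p q where pq: "p < q" "q < L" "es!p = es!q"
      using L by (metis distinct_conv_nth linorder_neqE_nat)
    have pL: "p < L" using pq by simp
    show False
    proof (cases "L = 2")
      case True then have "p = 0" "q = 1" using pq by auto
      then have "es!0 = es!Suc 0" using pq by simp
      moreover have "es!0 \<noteq> es!Suc 0" using n L True unfolding nb_def by simp
      ultimately show False by simp
    next
      case False then have L3: "L \<ge> 3" using L2 by simp
      have e: "{vs!p, vs!((p+1) mod L)} = {vs!q, vs!((q+1) mod L)}"
        using ed2[OF pL] ed2[OF pq(2)] pq by simp
      have dv: "distinct vs" using d vs_def by simp
      have m1: "(p+1) mod L < L" "(q+1) mod L < L" using L2 by auto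
      have "vs!p \<noteq> vs!q" using dv pq lvs by (simp add: nth_eq_iff_index_eq)
      then have "vs!p = vs!((q+1) mod L) \<and> vs!((p+1) mod L) = vs!q" using e by (auto simp: doubleton_eq_iff)
      then have "p = (q+1) mod L" "(p+1) mod L = q" using dv lvs m1 pq by (auto simp: nth_eq_iff_index_eq)
      then have qp: "q = p + 1" using pq by (metis Suc_eq_plus1 Suc_lessI mod_less not_less_eq)
      show False
      proof (cases "p + 2 < L")
        case True then have "(q+1) mod L = p + 2" using qp by simp
        then show False using \<open>p = (q+1) mod L\<close> by simp
      next
        case False then have "p + 2 = L" using qp pq by simp
        then have "(q+1) mod L = 0" using qp by simp
        then show False using \<open>p = (q+1) mod L\<close> \<open>p + 2 = L\<close> L3 by simp
      qed
    qed
  qed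
  show ?thesis unfolding is_cycle_def
    apply (rule exI[of _ vs], rule exI[of _ es])
    using lvs L L2 d vs_def des sE ed2 by auto
qed

definition VC :: "'e set \<Rightarrow> 'v set" where "VC C = \<Union>(ends ` C)"

lemma walk_VC: "walk H xs es \<Longrightarrow> VC (set es) \<subseteq> set xs"
  unfolding walk_def VC_def
  apply (auto simp: in_set_conv_nth)
  using Suc_less_eq less_SucI by blast+

lemma walk_seg: assumes "walk H xs es" "i + L \<le> length es"
  shows "walk H (take (Suc L) (drop i xs)) (take L (drop i es))"
  using assms unfolding walk_def
  apply (auto simp: min_def)
  apply (meson in_set_dropD in_set_takeD subsetD)+
  done

lemma nb_seg: "nb es \<Longrightarrow> nb (take L (drop i es))"
  unfolding nb_def by auto

lemma nondistinct_cycle: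
  assumes H: "H \<subseteq> E" and w: "walk H xs es" and n: "nb es" and nd: "\<not> distinct xs"
  shows "\<exists>C \<subseteq> set es. is_cycle E ends C"
proof -
  obtain pre y post where p: "y \<in> set pre" "distinct pre" "xs = pre @ y # post"
    using nd not_distinct_conv_prefix by metis
  obtain i where i: "i < length pre" "pre!i = y" using p(1) by (metis in_set_conv_nth)
  define j where "j = length pre"
  define L where "L = j - i"
  have lx: "length xs = Suc (length es)" using w by (simp add: walk_def)
  have jle: "j \<le> length es" using lx p(3) j_def by simp
  have iL: "i + L \<le> length es" using jle i L_def j_def by simp
  define xs' where "xs' = take (Suc L) (drop i xs)"
  define es' where "es' = take L (drop i es)"
  have w': "walk H xs' es'" using walk_seg[OF w iL] xs'_def es'_def by simp
  have n': "nb es'" using nb_seg[OF n] es'_def by simp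
  have le: "length es' = L" using iL es'_def by simp
  have L1: "L \<ge> 1" using i L_def j_def by simp
  have x0: "xs'!0 = y" using xs'_def p(3) i by (simp add: nth_append)
  have xL: "xs'!L = y" using xs'_def p(3) i L_def j_def by (simp add: nth_append)
  have "take L xs' = drop i pre" using xs'_def p(3) i L_def j_def by simp
  then have dd: "distinct (take L xs')" using p(2) by simp
  have "is_cycle E ends (set es')" using closed_cycle[OF H w' n' le L1] x0 xL dd by simp
  moreover have "set es' \<subseteq> set es" using es'_def by (meson in_set_dropD in_set_takeD subsetI)
  ultimately show ?thesis by blast
qed

lemma walk_rev: assumes "walk H xs es" shows "walk H (rev xs) (rev es)"
proof -
  have l: "length xs = Suc (length es)" using assms by (simp add: walk_def)
  { fix i assume i: "i < length es"
    have "ends (rev es ! i) = ends (es ! (length es - Suc i))" using i by (simp add: rev_nth)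
    also have "\<dots> = {xs!(length es - Suc i), xs!Suc (length es - Suc i)}"
      using assms i unfolding walk_def by simp
    also have "\<dots> = {rev xs ! i, rev xs ! Suc i}" using i l
      by (simp add: rev_nth Suc_diff_Suc insert_commute)
    finally have "ends (rev es ! i) = {rev xs ! i, rev xs ! Suc i}" . }
  then show ?thesis using assms l unfolding walk_def by auto
qed

lemma nb_rev: "nb es \<Longrightarrow> nb (rev es)"
  unfolding nb_def
proof (intro allI impI)
  fix i assume n: "\<forall>i. Suc i < length es \<longrightarrow> es ! i \<noteq> es ! Suc i" and i: "Suc i < length (rev es)"
  define j where "j = length es - Suc (Suc i)"
  have j: "Suc j < length es" "length es - Suc i = Suc j" "length es - Suc (Suc i) = j" using i j_def by auto
  have "rev es ! i = es ! Suc j" "rev es ! Suc i = es ! j" using i j by (simp_all add: rev_nth)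
  then show "rev es ! i \<noteq> rev es ! Suc i" using n j by metis
qed

lemma walk_append: assumes a: "walk H xs es" and b: "walk H ys fs" and c: "last xs = hd ys"
  shows "walk H (xs @ tl ys) (es @ fs)"
proof -
  have lx: "length xs = Suc (length es)" using a by (simp add: walk_def)
  have ly: "length ys = Suc (length fs)" using b by (simp add: walk_def)
  have lastx: "xs ! length es = hd ys" using c lx by (metis diff_Suc_1 last_conv_nth list.size(3) nat.simps(3))
  have hy: "hd ys = ys!0" using ly by (cases ys) auto
  { fix i assume i: "i < length es + length fs"
    have "ends ((es @ fs) ! i) = {(xs @ tl ys) ! i, (xs @ tl ys) ! Suc i}"
    proof (cases "i < length es")
      case True
      then show ?thesis using a lx unfolding walk_def by (simp add: nth_append)
    next
      case False
      define t where "t = i - length es"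
      have t: "t < length fs" "i = length es + t" using False i t_def by auto
      have e1: "(es @ fs) ! i = fs ! t" using t by (simp add: nth_append)
      have e2: "(xs @ tl ys) ! i = ys ! t"
      proof (cases "t = 0")
        case True then show ?thesis using t lx lastx hy by (simp add: nth_append)
      next
        case False then show ?thesis using t lx ly by (simp add: nth_append nth_tl)
      qed
      have e3: "(xs @ tl ys) ! Suc i = ys ! Suc t" using t lx ly by (simp add: nth_append nth_tl)
      show ?thesis using b t unfolding walk_def e1 e2 e3 by simp
    qed }
  then show ?thesis using a b lx ly unfolding walk_def by auto
qed

lemma nb_append: "nb a \<Longrightarrow> nb b \<Longrightarrow> (a \<noteq> [] \<Longrightarrow> b \<noteq> [] \<Longrightarrow> last a \<noteq> hd b) \<Longrightarrow> nb (a @ b)"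
  unfolding nb_def
proof (intro allI impI)
  fix i assume na: "\<forall>i. Suc i < length a \<longrightarrow> a ! i \<noteq> a ! Suc i"
    and nbb: "\<forall>i. Suc i < length b \<longrightarrow> b ! i \<noteq> b ! Suc i"
    and j: "a \<noteq> [] \<Longrightarrow> b \<noteq> [] \<Longrightarrow> last a \<noteq> hd b" and i: "Suc i < length (a @ b)"
  consider "Suc i < length a" | "Suc i = length a" | "Suc i > length a" by linarith
  then show "(a @ b) ! i \<noteq> (a @ b) ! Suc i"
  proof cases
    case 1 then show ?thesis using na by (simp add: nth_append)
  next
    case 2
    then have "a \<noteq> []" "b \<noteq> []" using i by auto
    moreover have "(a @ b) ! i = last a" using 2 \<open>a \<noteq> []\<close> last_conv_nth[of a] by (simp add: nth_append del: One_nat_def) (metis diff_Suc_1)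
    moreover have "(a @ b) ! Suc i = hd b" using 2 \<open>b \<noteq> []\<close> by (simp add: nth_append hd_conv_nth)
    ultimately show ?thesis using j by simp
  next
    case 3
    then have "(a @ b) ! i = b ! (i - length a)" "(a @ b) ! Suc i = b ! Suc (i - length a)"
      by (simp_all add: nth_append Suc_diff_le)
    moreover have "Suc (i - length a) < length b" using 3 i by simp
    ultimately show ?thesis using nbb by simp
  qed
qed

lemma walk_butlast: assumes "walk H xs es" "es \<noteq> []"
  shows "walk H (butlast xs) (butlast es)"
  using assms unfolding walk_def
  by (auto simp: nth_butlast) (meson in_set_butlastD subsetD)

lemma nb_butlast: "nb es \<Longrightarrow> nb (butlast es)"
  unfolding nb_def by (auto simp: nth_butlast)


end

context mgr begin
lemma walk_last_edge: assumes "walk H xs es" "es \<noteq> []"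
  shows "ends (last es) = {last (butlast xs), last xs}"
proof -
  have l: "length xs = Suc (length es)" using assms by (simp add: walk_def)
  define n where "n = length es - 1"
  have n: "length es = Suc n" using assms n_def by (cases es) auto
  have "ends (es!n) = {xs!n, xs!Suc n}" using assms n unfolding walk_def by simp
  moreover have "last es = es!n" using n assms(2) by (simp add: last_conv_nth)
  moreover have "last xs = xs!Suc n" using l n last_conv_nth[of xs] by fastforce
  moreover have "last (butlast xs) = xs!n"
  proof -
    have lb: "length (butlast xs) = Suc n" using l n by simp
    then have "butlast xs \<noteq> []" by (metis list.size(3) nat.simps(3))
    then show ?thesis using lb last_conv_nth[of "butlast xs"] by (simp add: nth_butlast)
  qed
  ultimately show ?thesis by simp
qed

lemma hd_butlast2: "length xs \<ge> 2 \<Longrightarrow> hd (butlast xs) = hd xs"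
  by (cases xs) auto

lemma hd_last_nd: "length xs \<ge> 2 \<Longrightarrow> hd xs = last xs \<Longrightarrow> \<not> distinct xs"
proof (cases xs)
  case (Cons a t)
  assume "length xs \<ge> 2" "hd xs = last xs"
  then have "t \<noteq> []" using Cons by auto
  then have "last t = a" using Cons \<open>hd xs = last xs\<close> by simp
  then have "a \<in> set t" using \<open>t \<noteq> []\<close> by (metis last_in_set)
  then show ?thesis using Cons by simp
qed simp

lemma two_walks:
  assumes "H \<subseteq> E" "walk H xs1 es1" "walk H xs2 es2" "nb es1" "nb es2"
    "hd xs1 = hd xs2" "last xs1 = last xs2" "(xs1, es1) \<noteq> (xs2, es2)"
  shows "\<exists>C \<subseteq> set es1 \<union> set es2. is_cycle E ends C"
  using assms
proof (induction "length es1 + length es2" arbitrary: xs1 es1 xs2 es2 rule: less_induct)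
  case less
  have H: "H \<subseteq> E" using less by simp
  have l1: "length xs1 = Suc (length es1)" and l2: "length xs2 = Suc (length es2)"
    using less by (simp_all add: walk_def)
  show ?case
  proof (cases "es1 \<noteq> [] \<and> es2 \<noteq> [] \<and> last es1 = last es2")
    case True
    then have ne: "es1 \<noteq> []" "es2 \<noteq> []" and le: "last es1 = last es2" by auto
    have eE: "last es1 \<in> E"
    proof -
      have "last es1 \<in> set es1" using ne by simp
      then show ?thesis using less(3) H unfolding walk_def by blast
    qed
    have e1: "ends (last es1) = {last (butlast xs1), last xs1}" using walk_last_edge less(3) ne by simp
    have e2: "ends (last es1) = {last (butlast xs2), last xs2}" using walk_last_edge less(4) ne le by simp
    have d1: "last (butlast xs1) \<noteq> last xs1" using ends_neq[OF eE e1] .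
    have d2: "last (butlast xs2) \<noteq> last xs2" using ends_neq[OF eE e2] .
    have bl: "last (butlast xs1) = last (butlast xs2)" using e1 e2 d1 d2 less(8)
      by (auto simp: doubleton_eq_iff)
    have w1: "walk H (butlast xs1) (butlast es1)" using walk_butlast less(3) ne by simp
    have w2: "walk H (butlast xs2) (butlast es2)" using walk_butlast less(4) ne by simp
    have hb1: "hd (butlast xs1) = hd xs1" using l1 ne(1) hd_butlast2[of xs1] by (cases es1) auto
    have hb2: "hd (butlast xs2) = hd xs2" using l2 ne(2) hd_butlast2[of xs2] by (cases es2) auto
    have xne: "xs1 \<noteq> []" "xs2 \<noteq> []" using l1 l2 by auto
    have dif: "(butlast xs1, butlast es1) \<noteq> (butlast xs2, butlast es2)"
    proof
      assume "(butlast xs1, butlast es1) = (butlast xs2, butlast es2)"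
      then have "butlast xs1 = butlast xs2" "butlast es1 = butlast es2" by auto
      then have "xs1 = xs2" "es1 = es2" using less(8) le ne xne
        by (metis append_butlast_last_id)+
      then show False using less(9) by simp
    qed
    have lt: "length (butlast es1) + length (butlast es2) < length es1 + length es2" using ne by (cases es1; cases es2) auto
    obtain C where "C \<subseteq> set (butlast es1) \<union> set (butlast es2)" "is_cycle E ends C"
      using less(1)[OF lt H w1 w2 nb_butlast[OF less(5)] nb_butlast[OF less(6)]] hb1 hb2 less(7) bl dif
      by metis
    then show ?thesis by (meson dual_order.trans in_set_butlastD subsetI sup.mono)
  next
    case False
    define xs where "xs = xs1 @ tl (rev xs2)"
    define es where "es = es1 @ rev es2"
    have w: "walk H xs es" unfolding xs_def es_def
      using walk_append[OF less(3) walk_rev[OF less(4)]] less(8) l2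
      by (metis hd_rev)
    have n: "nb es" unfolding es_def
      using nb_append[OF less(5) nb_rev[OF less(6)]] False by (auto simp: hd_rev)
    have nd: "\<not> distinct xs"
    proof (cases "es2 = []")
      case True
      then have x2: "xs2 = [hd xs2]" using l2 by (cases xs2) auto
      then have xx: "xs = xs1" using xs_def by (metis rev_singleton_conv list.sel(3) append_Nil2)
      have lx: "last xs1 = hd xs1" using x2 less(7,8) by (metis last_ConsL)
      have "es1 \<noteq> []"
      proof
        assume "es1 = []" then have "xs1 = [hd xs1]" using l1 by (cases xs1) auto
        then show False using less(7,9) True x2 \<open>es1 = []\<close> by simp
      qed
      then have "length xs1 \<ge> 2" using l1 by (cases es1) auto
      then show ?thesis using hd_last_nd[of xs1] lx xx by simp
    next
      case False
      have "length (tl (rev xs2)) = length es2" using l2 by simp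
      then have tne: "tl (rev xs2) \<noteq> []" using False by (metis length_0_conv)
      then have "last xs = last (rev xs2)" unfolding xs_def by (simp add: last_tl)
      then have "last xs = hd xs2" by (simp add: last_rev)
      moreover have "hd xs = hd xs1" unfolding xs_def using l1 by (cases xs1) auto
      moreover have "length xs \<ge> 2"
      proof -
        have "length (tl (rev xs2)) \<ge> 1" using tne by (cases "tl (rev xs2)") auto
        then show ?thesis unfolding xs_def using l1 by simp
      qed
      ultimately show ?thesis using less(7) hd_last_nd[of xs] by simp
    qed
    obtain C where "C \<subseteq> set es" "is_cycle E ends C" using nondistinct_cycle[OF H w n nd] by blast
    then show ?thesis unfolding es_def by auto
  qed
qed



definition dg :: "'e set \<Rightarrow> 'v \<Rightarrow> nat" where "dg H v = card {e\<in>H. v \<in> ends e}"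
definition md2 :: "'e set \<Rightarrow> bool" where "md2 H \<longleftrightarrow> (\<forall>v\<in>VC H. dg H v \<ge> 2)"
definition Bs :: "'e set \<Rightarrow> 'v set" where "Bs H = {v\<in>VC H. dg H v \<ge> 3}"

lemma finite_ends: "e \<in> E \<Longrightarrow> finite (ends e)"
  using two[of e] card.infinite by fastforce

lemma finite_VC: assumes "H \<subseteq> E" shows "finite (VC H)"
proof -
  have "finite H" using finE assms finite_subset by blast
  moreover have "\<forall>e\<in>H. finite (ends e)" using finite_ends assms by blast
  ultimately show ?thesis unfolding VC_def by blast
qed

lemma VC_mono: "A \<subseteq> B \<Longrightarrow> VC A \<subseteq> VC B" unfolding VC_def by auto

lemma walk_set_VC: assumes "walk H xs es" "es \<noteq> []" shows "set xs \<subseteq> VC (set es)"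
proof
  fix x assume "x \<in> set xs"
  then obtain i where i: "i < length xs" "xs!i = x" by (metis in_set_conv_nth)
  have l: "length xs = Suc (length es)" using assms by (simp add: walk_def)
  show "x \<in> VC (set es)"
  proof (cases "i < length es")
    case True
    then have "x \<in> ends (es!i)" using assms i unfolding walk_def by simp
    then show ?thesis unfolding VC_def using True by auto
  next
    case False
    then have ii: "i = Suc (i - 1)" "i - 1 < length es" using i l assms(2) by (cases es; auto)+
    then have "ends (es!(i-1)) = {xs!(i-1), xs!i}" using assms unfolding walk_def by (metis)
    then have "x \<in> ends (es!(i-1))" using i by simp
    then show ?thesis unfolding VC_def using ii by auto
  qed
qed

lemma walk_two: "e \<in> H \<Longrightarrow> ends e = {a, y} \<Longrightarrow> walk H [a, y] [e]"
  unfolding walk_def by simp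

lemma extend:
  assumes H: "H \<subseteq> E" and m: "md2 H" and w: "walk H xs es" and n: "nb es" and d: "distinct xs"
    and sx: "set xs \<subseteq> VC H" and e: "e \<in> H" and le: "last xs \<in> ends e"
    and ne: "es \<noteq> [] \<longrightarrow> e \<noteq> last es"
  shows "(\<exists>C\<subseteq>H. is_cycle E ends C \<and> VC C \<inter> Bs H \<subseteq> set xs) \<or>
         (\<exists>ys fs. walk H (xs@ys) (es@e#fs) \<and> nb (es@e#fs) \<and> distinct (xs@ys) \<and> ys \<noteq> [] \<and>
            last ys \<in> Bs H \<and> (\<forall>y\<in>set (butlast ys). y \<notin> Bs H))"
  using w n d sx e le ne
proof (induction "card (VC H) - length xs" arbitrary: xs es e rule: less_induct)
  case less
  have eE: "e \<in> E" using less H by auto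
  have c2: "card (ends e) = 2" using two[OF eE] .
  have "card (ends e - {last xs}) = 1" using c2 less(7) card_Diff_singleton[OF less(7)]
    by simp
  then obtain y where "ends e - {last xs} = {y}" by (metis card_1_singletonE)
  then have ey: "ends e = {last xs, y}" "y \<noteq> last xs" using less(7) by auto
  define xs' where "xs' = xs @ [y]"
  define es' where "es' = es @ [e]"
  have lx: "length xs = Suc (length es)" using less(2) by (simp add: walk_def)
  have xne: "xs \<noteq> []" using lx by auto
  have w': "walk H xs' es'" unfolding xs'_def es'_def
    using walk_append[OF less(2) walk_two[OF less(6) ey(1)]] xne by simp
  have n': "nb es'" unfolding es'_def
    using nb_append[OF less(3), of "[e]"] less(8) by (auto simp: nb_def)
  have yV: "y \<in> VC H" using ey less(6) unfolding VC_def by auto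
  show ?case
  proof (cases "y \<in> set xs")
    case True
    then have "\<not> distinct xs'" unfolding xs'_def by simp
    then obtain C where C: "C \<subseteq> set es'" "is_cycle E ends C"
      using nondistinct_cycle[OF H w' n'] by blast
    have "VC C \<subseteq> set xs'" using walk_VC[OF w'] VC_mono[OF C(1)] by blast
    then have "VC C \<subseteq> set xs" using True xs'_def by auto
    moreover have "C \<subseteq> H" using C(1) w' unfolding walk_def by blast
    ultimately show ?thesis using C(2) by blast
  next
    case False
    note yn = False
    show ?thesis
    proof (cases "y \<in> Bs H")
      case True
      then show ?thesis using w' n' less(4) yn unfolding xs'_def es'_def
        by (intro disjI2 exI[of _ "[y]"] exI[of _ "[]"]) auto
    next
      case False
      have "dg H y \<ge> 2" using m yV unfolding md2_def by blast
      then have "card {f\<in>H. y \<in> ends f} \<ge> 2" unfolding dg_def .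
      moreover have "e \<in> {f\<in>H. y \<in> ends f}" using less(6) ey by auto
      moreover have "finite {f\<in>H. y \<in> ends f}" using H finE by (metis (no_types, lifting) finite_subset mem_Collect_eq subsetI)
      ultimately have "card ({f\<in>H. y \<in> ends f} - {e}) \<ge> 1" by (simp add: card_Diff_singleton)
      then have "{f\<in>H. y \<in> ends f} - {e} \<noteq> {}" by (metis card.empty not_one_le_zero)
      then obtain e' where e': "e' \<in> H" "y \<in> ends e'" "e' \<noteq> e" by blast
      have d': "distinct xs'" using less(4) yn xs'_def by simp
      have s': "set xs' \<subseteq> VC H" using less(5) yV xs'_def by simp
      have "length xs' \<le> card (VC H)" using d' s' finite_VC[OF H]
        by (metis card_mono distinct_card)
      then have lt: "card (VC H) - length xs' < card (VC H) - length xs" unfolding xs'_def by simp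
      have le': "last xs' \<in> ends e'" using e' xs'_def by simp
      have ne': "es' \<noteq> [] \<longrightarrow> e' \<noteq> last es'" using e' es'_def by simp
      note IH = less(1)[OF lt w' n' d' s' e'(1) le' ne']
      then show ?thesis
      proof
        assume "\<exists>C\<subseteq>H. is_cycle E ends C \<and> VC C \<inter> Bs H \<subseteq> set xs'"
        then show ?thesis using False xs'_def by auto
      next
        assume "\<exists>ys fs. walk H (xs' @ ys) (es' @ e' # fs) \<and> nb (es' @ e' # fs) \<and>
          distinct (xs' @ ys) \<and> ys \<noteq> [] \<and> last ys \<in> Bs H \<and> (\<forall>y\<in>set (butlast ys). y \<notin> Bs H)"
        then obtain ys fs where r: "walk H (xs' @ ys) (es' @ e' # fs)" "nb (es' @ e' # fs)"
          "distinct (xs' @ ys)" "ys \<noteq> []" "last ys \<in> Bs H" "\<forall>y\<in>set (butlast ys). y \<notin> Bs H" by blast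
        show ?thesis
          apply (rule disjI2, rule exI[of _ "y # ys"], rule exI[of _ "e' # fs"])
          using r False unfolding xs'_def es'_def by auto
      qed
    qed
  qed
qed



definition bc :: "'e set \<Rightarrow> 'v list \<Rightarrow> nat" where
  "bc H xs = length (filter (\<lambda>x. x \<in> Bs H) (tl xs))"

definition P :: "'e set \<Rightarrow> 'v \<Rightarrow> nat \<Rightarrow> ('v list \<times> 'e list) set" where
  "P H v r = {(xs, es). walk H xs es \<and> nb es \<and> distinct xs \<and> hd xs = v \<and> set xs \<subseteq> VC H \<and>
      last xs \<in> Bs H \<and> bc H xs = r}"

lemma bc_app: "xs \<noteq> [] \<Longrightarrow> bc H (xs @ us) = bc H xs + length (filter (\<lambda>x. x \<in> Bs H) us)"
  unfolding bc_def by simp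

lemma filter_last: "us \<noteq> [] \<Longrightarrow> last us \<in> A \<Longrightarrow> length (filter (\<lambda>x. x \<in> A) us) \<ge> 1"
proof -
  assume "us \<noteq> []" "last us \<in> A"
  then have "last us \<in> set (filter (\<lambda>x. x \<in> A) us)" by simp
  then show ?thesis by (cases "filter (\<lambda>x. x \<in> A) us") auto
qed

lemma P_prefix_unique:
  assumes a: "(xs, es) \<in> P H v r" and b: "(xs', es') \<in> P H v r"
    and c: "xs @ a1 = xs' @ a2" and d: "es @ b1 = es' @ b2"
  shows "(xs, es) = (xs', es')"
proof -
  have l: "length xs = Suc (length es)" "length xs' = Suc (length es')"
    using a b by (auto simp: P_def walk_def)
  have ne: "xs \<noteq> []" "xs' \<noteq> []" using l by auto
  have bcs: "bc H xs = r" "bc H xs' = r" "last xs \<in> Bs H" "last xs' \<in> Bs H" using a b by (auto simp: P_def)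
  have "xs = xs'"
  proof -
    obtain us where "xs = xs' @ us \<and> us @ a1 = a2 \<or> xs @ us = xs' \<and> a1 = us @ a2"
      using c append_eq_append_conv2 by metis
    then show ?thesis
    proof
      assume h: "xs = xs' @ us \<and> us @ a1 = a2"
      show ?thesis
      proof (cases "us = []")
        case False
        then have "last us \<in> Bs H" using h bcs by simp
        then have "length (filter (\<lambda>x. x \<in> Bs H) us) \<ge> 1" using filter_last False by blast
        then show ?thesis using bc_app[OF ne(2), of H us] h bcs by simp
      qed (use h in simp)
    next
      assume h: "xs @ us = xs' \<and> a1 = us @ a2"
      show ?thesis
      proof (cases "us = []")
        case False
        then have "last us \<in> Bs H" using h bcs by (metis last_appendR)
        then have "length (filter (\<lambda>x. x \<in> Bs H) us) \<ge> 1" using filter_last False by blast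
        then show ?thesis using bc_app[OF ne(1), of H us] h bcs by simp
      qed (use h in simp)
    qed
  qed
  then have "length es = length es'" using l by simp
  then have "es = es'" using d by (metis append_eq_append_conv)
  then show ?thesis using \<open>xs = xs'\<close> by simp
qed

lemma card_Bs_path: assumes "(xs, es) \<in> P H v r" shows "card (set xs \<inter> Bs H) \<le> Suc r"
proof -
  have l: "length xs = Suc (length es)" using assms by (auto simp: P_def walk_def)
  then obtain x t where xt: "xs = x # t" by (cases xs) auto
  have "set xs \<inter> Bs H = set (filter (\<lambda>x. x \<in> Bs H) xs)" by auto
  then have "card (set xs \<inter> Bs H) \<le> length (filter (\<lambda>x. x \<in> Bs H) xs)" by (metis card_length)
  also have "\<dots> \<le> Suc (length (filter (\<lambda>x. x \<in> Bs H) t))" using xt by simp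
  also have "\<dots> = Suc r" using assms xt by (simp add: P_def bc_def)
  finally show ?thesis .
qed

lemma filter_one: "ys \<noteq> [] \<Longrightarrow> last ys \<in> A \<Longrightarrow> (\<forall>y\<in>set (butlast ys). y \<notin> A) \<Longrightarrow>
   length (filter (\<lambda>x. x \<in> A) ys) = 1"
proof -
  assume a: "ys \<noteq> []" "last ys \<in> A" "\<forall>y\<in>set (butlast ys). y \<notin> A"
  have "ys = butlast ys @ [last ys]" using a by simp
  then have "filter (\<lambda>x. x \<in> A) ys = filter (\<lambda>x. x \<in> A) (butlast ys) @ [last ys]"
    using a by (metis filter.simps filter_append)
  moreover have "filter (\<lambda>x. x \<in> A) (butlast ys) = []" using a(3) by (simp add: filter_empty_conv)
  ultimately show ?thesis by simp
qed

lemma ext1: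
  assumes H: "H \<subseteq> E" and m: "md2 H" and W: "(xs, es) \<in> P H v r"
    and noc: "\<forall>C\<subseteq>H. is_cycle E ends C \<longrightarrow> card (VC C \<inter> Bs H) > Suc r"
    and e: "e \<in> H" "last xs \<in> ends e" "es \<noteq> [] \<longrightarrow> e \<noteq> last es"
  shows "\<exists>ys fs. (xs @ ys, es @ e # fs) \<in> P H v (Suc r)"
proof -
  have w: "walk H xs es" "nb es" "distinct xs" "set xs \<subseteq> VC H" "hd xs = v" "bc H xs = r"
    using W unfolding P_def by auto
  have l: "length xs = Suc (length es)" using w(1) unfolding walk_def by simp
  have xne: "xs \<noteq> []" using l by auto
  have X: "(\<exists>C\<subseteq>H. is_cycle E ends C \<and> VC C \<inter> Bs H \<subseteq> set xs) \<or>
         (\<exists>ys fs. walk H (xs@ys) (es@e#fs) \<and> nb (es@e#fs) \<and> distinct (xs@ys) \<and> ys \<noteq> [] \<and>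
            last ys \<in> Bs H \<and> (\<forall>y\<in>set (butlast ys). y \<notin> Bs H))"
    by (rule extend[OF H m w(1) w(2) w(3) w(4) e(1) e(2) e(3)])
  have nc: "\<not> (\<exists>C\<subseteq>H. is_cycle E ends C \<and> VC C \<inter> Bs H \<subseteq> set xs)"
  proof
    assume "\<exists>C\<subseteq>H. is_cycle E ends C \<and> VC C \<inter> Bs H \<subseteq> set xs"
    then obtain C where C: "C \<subseteq> H" "is_cycle E ends C" "VC C \<inter> Bs H \<subseteq> set xs" by blast
    have sub: "VC C \<inter> Bs H \<subseteq> set xs \<inter> Bs H" using C(3) by blast
    have "card (VC C \<inter> Bs H) \<le> card (set xs \<inter> Bs H)" by (rule card_mono[OF _ sub]) simp
    also have "\<dots> \<le> Suc r" using card_Bs_path[OF W] .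
    finally have "card (VC C \<inter> Bs H) \<le> Suc r" .
    moreover have "card (VC C \<inter> Bs H) > Suc r" using noc C(1) C(2) by blast
    ultimately show False by simp
  qed
  obtain ys fs where r: "walk H (xs@ys) (es@e#fs)" "nb (es@e#fs)" "distinct (xs@ys)" "ys \<noteq> []"
            "last ys \<in> Bs H" "\<forall>y\<in>set (butlast ys). y \<notin> Bs H" using X nc by blast
  have s1: "set (xs@ys) \<subseteq> VC (set (es@e#fs))" using walk_set_VC[OF r(1)] by simp
  have "set (es@e#fs) \<subseteq> H" using r(1) unfolding walk_def by simp
  then have s2: "VC (set (es@e#fs)) \<subseteq> VC H" by (rule VC_mono)
  have s: "set (xs@ys) \<subseteq> VC H" using s1 s2 by (rule subset_trans)
  have b: "bc H (xs @ ys) = Suc r" using bc_app[OF xne, of H ys] filter_one[OF r(4) r(5) r(6)] w(6) by simp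
  have h: "hd (xs @ ys) = v" using xne w(5) by simp
  have l2: "last (xs @ ys) \<in> Bs H" using r(4) r(5) by simp
  have "(xs @ ys, es @ e # fs) \<in> P H v (Suc r)" unfolding P_def using r(1) r(2) r(3) s b h l2 by simp
  then show ?thesis by blast
qed

lemma two_edges:
  assumes H: "H \<subseteq> E" and w: "w \<in> Bs H"
  shows "\<exists>e1 e2. e1 \<in> H \<and> e2 \<in> H \<and> w \<in> ends e1 \<and> w \<in> ends e2 \<and> e1 \<noteq> x \<and> e2 \<noteq> x \<and> e1 \<noteq> e2"
proof -
  define A where "A = {e\<in>H. w \<in> ends e} - {x}"
  have fin: "finite {e\<in>H. w \<in> ends e}" using H finE by (metis (no_types, lifting) finite_subset mem_Collect_eq subsetI)
  have "card {e\<in>H. w \<in> ends e} \<ge> 3" using w unfolding Bs_def dg_def by simp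
  then have cA: "card A \<ge> 2" unfolding A_def
    using card_Diff_singleton_if[of "{e\<in>H. w \<in> ends e}" x] by (auto split: if_splits)
  then have "A \<noteq> {}" by auto
  then obtain e1 where e1: "e1 \<in> A" by blast
  have "card (A - {e1}) \<ge> 1" using cA e1 by (simp add: card_Diff_singleton)
  then have "A - {e1} \<noteq> {}" by (metis card.empty not_one_le_zero)
  then obtain e2 where e2: "e2 \<in> A - {e1}" by blast
  show ?thesis using e1 e2 unfolding A_def by blast
qed



lemma grow:
  assumes H: "H \<subseteq> E" and m: "md2 H"
    and noc: "\<forall>C\<subseteq>H. is_cycle E ends C \<longrightarrow> card (VC C \<inter> Bs H) > Suc r"
    and S: "S \<subseteq> P H v r" "finite S"
  shows "\<exists>S'. S' \<subseteq> P H v (Suc r) \<and> finite S' \<and> card S' = 2 * card S"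
proof -
  define Q where "Q = (\<lambda>W X1 X2. X1 \<in> P H v (Suc r) \<and> X2 \<in> P H v (Suc r) \<and> X1 \<noteq> X2 \<and>
      (\<exists>a b. fst X1 = fst W @ a \<and> snd X1 = snd W @ b) \<and> (\<exists>a b. fst X2 = fst W @ a \<and> snd X2 = snd W @ b))"
  have ex: "\<forall>W\<in>S. \<exists>p. Q W (fst p) (snd p)"
  proof
    fix W assume "W \<in> S"
    then obtain xs es where W: "W = (xs, es)" "(xs, es) \<in> P H v r" using S by (cases W) auto
    have lB: "last xs \<in> Bs H" using W unfolding P_def by simp
    obtain e1 e2 where e: "e1 \<in> H" "e2 \<in> H" "last xs \<in> ends e1" "last xs \<in> ends e2"
      "e1 \<noteq> last es" "e2 \<noteq> last es" "e1 \<noteq> e2" using two_edges[OF H lB, of "last es"] by blast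
    obtain ys1 fs1 where X1: "(xs @ ys1, es @ e1 # fs1) \<in> P H v (Suc r)"
      using ext1[OF H m W(2) noc e(1) e(3)] e(5) by blast
    obtain ys2 fs2 where X2: "(xs @ ys2, es @ e2 # fs2) \<in> P H v (Suc r)"
      using ext1[OF H m W(2) noc e(2) e(4)] e(6) by blast
    have "(es @ e1 # fs1) ! length es \<noteq> (es @ e2 # fs2) ! length es" using e(7) by simp
    then have "(xs @ ys1, es @ e1 # fs1) \<noteq> (xs @ ys2, es @ e2 # fs2)" by auto
    then have "Q W (xs @ ys1, es @ e1 # fs1) (xs @ ys2, es @ e2 # fs2)"
      unfolding Q_def using X1 X2 W(1) by auto
    then show "\<exists>p. Q W (fst p) (snd p)" by (metis fst_conv snd_conv)
  qed
  obtain F where F: "\<forall>W\<in>S. Q W (fst (F W)) (snd (F W))" using bchoice[OF ex] by blast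
  define A where "A = (\<lambda>W. {fst (F W), snd (F W)})"
  define S' where "S' = (\<Union>W\<in>S. A W)"
  have sub: "S' \<subseteq> P H v (Suc r)" unfolding S'_def A_def using F unfolding Q_def by auto
  have fin: "finite S'" unfolding S'_def A_def using S(2) by simp
  have pre: "\<And>W X. W \<in> S \<Longrightarrow> X \<in> A W \<Longrightarrow> \<exists>a b. fst X = fst W @ a \<and> snd X = snd W @ b"
    using F unfolding A_def Q_def by auto
  have disj: "\<forall>W\<in>S. \<forall>W'\<in>S. W \<noteq> W' \<longrightarrow> A W \<inter> A W' = {}"
  proof (intro ballI impI)
    fix W W' assume WW: "W \<in> S" "W' \<in> S" "W \<noteq> W'"
    show "A W \<inter> A W' = {}"
    proof (rule ccontr)
      assume "A W \<inter> A W' \<noteq> {}"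
      then obtain X where X: "X \<in> A W" "X \<in> A W'" by blast
      obtain a b where ab: "fst X = fst W @ a" "snd X = snd W @ b" using pre[OF WW(1) X(1)] by blast
      obtain a' b' where ab': "fst X = fst W' @ a'" "snd X = snd W' @ b'" using pre[OF WW(2) X(2)] by blast
      have "(fst W, snd W) \<in> P H v r" "(fst W', snd W') \<in> P H v r" using WW S by auto
      then have "(fst W, snd W) = (fst W', snd W')"
        using P_prefix_unique[of "fst W" "snd W" H v r "fst W'" "snd W'" a a' b b'] ab ab' by simp
      then show False using WW(3) by (simp add: prod_eq_iff)
    qed
  qed
  have c2: "\<forall>W\<in>S. card (A W) = 2" using F unfolding A_def Q_def by auto
  have "card S' = (\<Sum>W\<in>S. card (A W))" unfolding S'_def
    by (rule card_UN_disjoint) (use S(2) disj in \<open>auto simp: A_def\<close>)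
  also have "\<dots> = (\<Sum>W\<in>S. 2)" using c2 by simp
  finally have "card S' = 2 * card S" by simp
  then show ?thesis using sub fin by blast
qed

lemma levels:
  assumes H: "H \<subseteq> E" and m: "md2 H" and v: "v \<in> Bs H"
    and noc: "\<forall>C\<subseteq>H. is_cycle E ends C \<longrightarrow> card (VC C \<inter> Bs H) > R"
  shows "r \<le> R \<Longrightarrow> \<exists>S. S \<subseteq> P H v r \<and> finite S \<and> card S = 2^r"
proof (induction r)
  case 0
  have vV: "v \<in> VC H" using v unfolding Bs_def by simp
  have "([v], []) \<in> P H v 0" using v vV unfolding P_def walk_def nb_def bc_def by simp
  then show ?case by (intro exI[of _ "{([v], [])}"]) simp
next
  case (Suc r)
  then obtain S where S: "S \<subseteq> P H v r" "finite S" "card S = 2^r" by auto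
  have noc': "\<forall>C\<subseteq>H. is_cycle E ends C \<longrightarrow> card (VC C \<inter> Bs H) > Suc r"
  proof (intro allI impI)
    fix C assume "C \<subseteq> H" "is_cycle E ends C"
    then have "card (VC C \<inter> Bs H) > R" using noc by blast
    then show "card (VC C \<inter> Bs H) > Suc r" using Suc(2) by simp
  qed
  obtain S' where "S' \<subseteq> P H v (Suc r)" "finite S'" "card S' = 2 * card S" using grow[OF H m noc' S(1,2)] by blast
  then show ?case using S(3) by (intro exI[of _ S']) simp
qed

lemma VC_Un: "VC (A \<union> B) = VC A \<union> VC B" unfolding VC_def by auto

lemma girth:
  assumes H: "H \<subseteq> E" and ne: "H \<noteq> {}" and m: "md2 H" and b: "card (Bs H) < 2^R"
  shows "\<exists>C\<subseteq>H. is_cycle E ends C \<and> card (VC C \<inter> Bs H) \<le> 2*R+2"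
proof (rule ccontr)
  assume "\<not> ?thesis"
  then have noc: "\<forall>C\<subseteq>H. is_cycle E ends C \<longrightarrow> card (VC C \<inter> Bs H) > 2*R+2"
    by (meson not_le)
  have finB: "finite (Bs H)" using finite_VC[OF H] unfolding Bs_def by simp
  show False
  proof (cases "Bs H = {}")
    case True
    obtain e where e: "e \<in> H" using ne by blast
    have "card (ends e) = 2" using two e H by blast
    then obtain x where x: "x \<in> ends e" by (metis card.empty ex_in_conv zero_neq_numeral)
    have xV: "x \<in> VC H" using e x unfolding VC_def by blast
    have w: "walk H [x] []" unfolding walk_def by simp
    have n: "nb []" unfolding nb_def by simp
    have "(\<exists>C\<subseteq>H. is_cycle E ends C \<and> VC C \<inter> Bs H \<subseteq> set [x]) \<or>
         (\<exists>ys fs. walk H ([x]@ys) ([]@e#fs) \<and> nb ([]@e#fs) \<and> distinct ([x]@ys) \<and> ys \<noteq> [] \<and>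
            last ys \<in> Bs H \<and> (\<forall>y\<in>set (butlast ys). y \<notin> Bs H))"
      by (rule extend[OF H m w n]) (use xV x e in auto)
    then show False
    proof
      assume "\<exists>C\<subseteq>H. is_cycle E ends C \<and> VC C \<inter> Bs H \<subseteq> set [x]"
      then obtain C where "C \<subseteq> H" "is_cycle E ends C" by blast
      then have "card (VC C \<inter> Bs H) > 2*R+2" using noc by blast
      then show False using True by simp
    next
      assume "\<exists>ys fs. walk H ([x]@ys) ([]@e#fs) \<and> nb ([]@e#fs) \<and> distinct ([x]@ys) \<and> ys \<noteq> [] \<and>
            last ys \<in> Bs H \<and> (\<forall>y\<in>set (butlast ys). y \<notin> Bs H)"
      then show False using True by blast
    qed
  next
    case False
    then obtain v where v: "v \<in> Bs H" by blast
    have nocR: "\<forall>C\<subseteq>H. is_cycle E ends C \<longrightarrow> card (VC C \<inter> Bs H) > R"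
    proof (intro allI impI)
      fix C assume "C \<subseteq> H" "is_cycle E ends C"
      then have "card (VC C \<inter> Bs H) > 2*R+2" using noc by blast
      then show "card (VC C \<inter> Bs H) > R" by simp
    qed
    obtain S where S: "S \<subseteq> P H v R" "finite S" "card S = 2^R" using levels[OF H m v nocR, of R] by blast
    define f where "f = (\<lambda>W::'v list \<times> 'e list. last (fst W))"
    have "f ` S \<subseteq> Bs H" unfolding f_def using S(1) unfolding P_def by auto
    then have "card (f ` S) \<le> card (Bs H)" using finB by (simp add: card_mono)
    have "\<not> inj_on f S"
    proof
      assume "inj_on f S"
      then have "card (f ` S) = card S" by (rule card_image)
      then show False using \<open>card (f ` S) \<le> card (Bs H)\<close> b S(3) by simp
    qed
    then obtain W1 W2 where W: "W1 \<in> S" "W2 \<in> S" "W1 \<noteq> W2" "f W1 = f W2" unfolding inj_on_def by blast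
    obtain xs1 es1 where W1: "W1 = (xs1, es1)" by (cases W1)
    obtain xs2 es2 where W2: "W2 = (xs2, es2)" by (cases W2)
    have P1: "(xs1, es1) \<in> P H v R" and P2: "(xs2, es2) \<in> P H v R" using W W1 W2 S(1) by auto
    have p1: "walk H xs1 es1" "nb es1" "hd xs1 = v" using P1 unfolding P_def by auto
    have p2: "walk H xs2 es2" "nb es2" "hd xs2 = v" using P2 unfolding P_def by auto
    have ll: "last xs1 = last xs2" using W(4) W1 W2 unfolding f_def by simp
    obtain C where C: "C \<subseteq> set es1 \<union> set es2" "is_cycle E ends C"
      using two_walks[OF H p1(1) p2(1) p1(2) p2(2)] p1(3) p2(3) ll W(3) W1 W2 by auto
    have CH: "C \<subseteq> H" using C(1) p1(1) p2(1) unfolding walk_def by blast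
    have "VC C \<subseteq> VC (set es1) \<union> VC (set es2)" using VC_mono[OF C(1)] VC_Un by blast
    also have "\<dots> \<subseteq> set xs1 \<union> set xs2" using walk_VC[OF p1(1)] walk_VC[OF p2(1)] by blast
    finally have "VC C \<inter> Bs H \<subseteq> (set xs1 \<inter> Bs H) \<union> (set xs2 \<inter> Bs H)" by blast
    then have "card (VC C \<inter> Bs H) \<le> card ((set xs1 \<inter> Bs H) \<union> (set xs2 \<inter> Bs H))"
      by (rule card_mono[rotated]) simp
    also have "\<dots> \<le> card (set xs1 \<inter> Bs H) + card (set xs2 \<inter> Bs H)" by (rule card_Un_le)
    also have "\<dots> \<le> Suc R + Suc R" using card_Bs_path[OF P1] card_Bs_path[OF P2] by simp
    finally have "card (VC C \<inter> Bs H) \<le> 2*R+2" by simp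
    moreover have "card (VC C \<inter> Bs H) > 2*R+2" using noc CH C(2) by blast
    ultimately show False by simp
  qed
qed



definition exc :: "'e set \<Rightarrow> int" where "exc H = int (card H) - int (card (VC H))"

lemma cyc_facts:
  assumes "is_cycle E ends C"
  shows "finite C" "card C = card (VC C)" "\<And>v. v \<in> VC C \<Longrightarrow> card {e\<in>C. v \<in> ends e} \<ge> 2"
proof -
  obtain vs es where c: "length vs = length es" "length vs \<ge> 2" "distinct vs" "distinct es"
    "set es \<subseteq> E" "C = set es" "\<forall>i < length es. ends (es ! i) = {vs ! i, vs ! ((i + 1) mod length vs)}"
    using assms unfolding is_cycle_def by blast
  define L where "L = length vs"
  have L2: "L \<ge> 2" using c L_def by simp
  show "finite C" using c by simp
  have VCs: "VC C = set vs"
  proof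
    show "VC C \<subseteq> set vs"
    proof
      fix x assume "x \<in> VC C"
      then obtain i where i: "i < length es" "x \<in> ends (es!i)" using c unfolding VC_def
        by (auto simp: in_set_conv_nth)
      have "(i+1) mod length vs < length vs" by (rule mod_less_divisor) (use L2 L_def in linarith)
      then show "x \<in> set vs" using c(7) i c(1) by auto
    qed
  next
    show "set vs \<subseteq> VC C"
    proof
      fix x assume "x \<in> set vs"
      then obtain i where i: "i < length vs" "vs!i = x" by (metis in_set_conv_nth)
      then have "x \<in> ends (es!i)" using c by auto
      moreover have "es!i \<in> C" using c i by simp
      ultimately show "x \<in> VC C" unfolding VC_def by blast
    qed
  qed
  show "card C = card (VC C)" using VCs c by (simp add: distinct_card)
  fix v assume "v \<in> VC C"
  then obtain j where j: "j < L" "vs!j = v" using VCs L_def by (metis in_set_conv_nth)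
  define j' where "j' = (if j = 0 then L - 1 else j - 1)"
  have j'L: "j' < L" using j L2 j'_def by auto
  have jj: "(j' + 1) mod L = j" using j L2 j'_def by auto
  have neq: "j' \<noteq> j" using j'_def L2 by auto
  have e1: "v \<in> ends (es!j)" using c j L_def by auto
  have e2: "v \<in> ends (es!j')" using c j'L jj j L_def by auto
  have d: "es!j \<noteq> es!j'" using c(4) j j'L neq c(1) L_def by (simp add: nth_eq_iff_index_eq)
  have sub: "{es!j, es!j'} \<subseteq> {e\<in>C. v \<in> ends e}" using e1 e2 c j j'L L_def by auto
  have "card {es!j, es!j'} = 2" using d by simp
  moreover have "finite {e\<in>C. v \<in> ends e}" using c by simp
  ultimately show "card {e\<in>C. v \<in> ends e} \<ge> 2" using sub by (metis card_mono)
qed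

lemma remove_cycle:
  assumes H: "H \<subseteq> E" and m: "md2 H" and C: "C \<subseteq> H" "is_cycle E ends C"
  shows "exc (H - C) \<ge> exc H - int (card (VC C \<inter> Bs H))"
proof -
  define D where "D = VC C - Bs H"
  have finH: "finite H" using H finE finite_subset by blast
  have finV: "finite (VC H)" using finite_VC[OF H] .
  have CV: "VC C \<subseteq> VC H" using VC_mono[OF C(1)] .
  have Dout: "\<And>v. v \<in> D \<Longrightarrow> v \<notin> VC (H - C)"
  proof
    fix v assume vD: "v \<in> D" and vH: "v \<in> VC (H - C)"
    have vC: "v \<in> VC C" using vD D_def by simp
    have "v \<in> VC H" using vC CV by blast
    then have "dg H v \<le> 2" using vD D_def unfolding Bs_def by auto
    have s: "{e\<in>C. v \<in> ends e} \<subseteq> {e\<in>H. v \<in> ends e}" using C by auto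
    have f: "finite {e\<in>H. v \<in> ends e}" using finH by simp
    have "card {e\<in>C. v \<in> ends e} \<ge> 2" using cyc_facts(3)[OF C(2) vC] .
    moreover have "card {e\<in>C. v \<in> ends e} \<le> card {e\<in>H. v \<in> ends e}" by (rule card_mono[OF f s])
    ultimately have "card {e\<in>C. v \<in> ends e} = card {e\<in>H. v \<in> ends e}"
      using \<open>dg H v \<le> 2\<close> unfolding dg_def by linarith
    then have eq: "{e\<in>C. v \<in> ends e} = {e\<in>H. v \<in> ends e}"
      using card_subset_eq[OF f s] by simp
    obtain e where "e \<in> H - C" "v \<in> ends e" using vH unfolding VC_def by blast
    then show False using eq by blast
  qed
  have "VC (H - C) \<subseteq> VC H - D" using Dout VC_mono[of "H - C" H] by blast
  then have c1: "card (VC (H - C)) \<le> card (VC H - D)" using finV by (simp add: card_mono)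
  have DV: "D \<subseteq> VC H" using CV D_def by blast
  have c2: "card (VC H - D) = card (VC H) - card D" using card_Diff_subset[OF _ DV] finV finite_subset[OF DV] by simp
  have c3: "card D \<le> card (VC H)" using card_mono[OF finV DV] .
  have finC: "finite C" using cyc_facts(1)[OF C(2)] .
  have c4: "card (H - C) = card H - card C" using card_Diff_subset[OF finC C(1)] .
  have c5: "card C \<le> card H" using card_mono[OF finH C(1)] .
  have finVC: "finite (VC C)" using finite_subset[OF CV finV] .
  have c6: "card (VC C) = card D + card (VC C \<inter> Bs H)"
  proof -
    have u: "VC C = D \<union> (VC C \<inter> Bs H)" unfolding D_def by blast
    have i: "D \<inter> (VC C \<inter> Bs H) = {}" unfolding D_def by blast
    have "finite D" "finite (VC C \<inter> Bs H)" using finVC D_def by auto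
    then show ?thesis using card_Un_disjoint[OF _ _ i] u by metis
  qed
  have c7: "card C = card (VC C)" using cyc_facts(2)[OF C(2)] .
  show ?thesis unfolding exc_def using c1 c2 c3 c4 c5 c6 c7 by linarith
qed

lemma prune:
  assumes "H \<subseteq> E"
  shows "\<exists>H'\<subseteq>H. md2 H' \<and> exc H' \<ge> exc H"
  using assms
proof (induction "card H" arbitrary: H rule: less_induct)
  case less
  have finH: "finite H" using less(2) finE finite_subset by blast
  show ?case
  proof (cases "md2 H")
    case True then show ?thesis by blast
  next
    case False
    then obtain v where v: "v \<in> VC H" "dg H v < 2" unfolding md2_def by auto
    then obtain e where e: "e \<in> H" "v \<in> ends e" unfolding VC_def by blast
    have f: "finite {f\<in>H. v \<in> ends f}" using finH by simp
    have "e \<in> {f\<in>H. v \<in> ends f}" using e by simp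
    moreover have "card {f\<in>H. v \<in> ends f} \<le> 1" using v(2) unfolding dg_def by simp
    ultimately have one: "{f\<in>H. v \<in> ends f} = {e}"
      using card_le_Suc0_iff_eq[OF f] by auto
    define H0 where "H0 = H - {e}"
    have vn: "v \<notin> VC H0"
    proof
      assume "v \<in> VC H0"
      then obtain f where "f \<in> H0" "v \<in> ends f" unfolding VC_def by blast
      then show False using one H0_def by blast
    qed
    have sub: "VC H0 \<subseteq> VC H - {v}" using vn VC_mono[of H0 H] H0_def by blast
    have finV: "finite (VC H)" using finite_VC[OF less(2)] .
    have "card (VC H0) \<le> card (VC H - {v})" using sub finV by (simp add: card_mono)
    also have "\<dots> = card (VC H) - 1" using v(1) by simp
    finally have c1: "card (VC H0) \<le> card (VC H) - 1" .
    have "0 < card (VC H)" using v(1) finV by (auto simp: card_gt_0_iff)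
    then have c0: "card (VC H) \<ge> 1" by simp
    have c2: "card H0 = card H - 1" using e H0_def by simp
    have "0 < card H" using e finH by (auto simp: card_gt_0_iff)
    then have c3: "card H \<ge> 1" by simp
    have ex: "exc H0 \<ge> exc H" unfolding exc_def using c0 c1 c2 c3 by linarith
    have lt: "card H0 < card H" using c2 c3 by simp
    have "H0 \<subseteq> E" using less(2) H0_def by blast
    then obtain H' where "H' \<subseteq> H0" "md2 H'" "exc H' \<ge> exc H0" using less(1)[OF lt] by blast
    then show ?thesis using ex H0_def by (intro exI[of _ H']) auto
  qed
qed

lemma round:
  assumes H: "H \<subseteq> E" and m: "md2 H" and ex: "exc H \<ge> 1" and b: "card (VC H) < 2^R"
  shows "\<exists>C H'. C \<subseteq> H \<and> is_cycle E ends C \<and> H' \<subseteq> H - C \<and> md2 H' \<and> exc H' \<ge> exc H - (2*R+2)"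
proof -
  have ne: "H \<noteq> {}" using ex unfolding exc_def by auto
  have "Bs H \<subseteq> VC H" unfolding Bs_def by auto
  then have "card (Bs H) \<le> card (VC H)" using finite_VC[OF H] by (simp add: card_mono)
  then have bb: "card (Bs H) < 2^R" using b by simp
  obtain C where C: "C \<subseteq> H" "is_cycle E ends C" "card (VC C \<inter> Bs H) \<le> 2*R+2"
    using girth[OF H ne m bb] by blast
  have r: "exc (H - C) \<ge> exc H - int (card (VC C \<inter> Bs H))" using remove_cycle[OF H m C(1) C(2)] .
  have "H - C \<subseteq> E" using H by blast
  then obtain H' where H': "H' \<subseteq> H - C" "md2 H'" "exc H' \<ge> exc (H - C)" using prune by blast
  have "exc H' \<ge> exc H - (2*R+2)" using r H'(3) C(3) by linarith
  then show ?thesis using C H' by blast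
qed

lemma iter:
  assumes H0: "H0 \<subseteq> E" "md2 H0" and b: "\<And>H. H \<subseteq> E \<Longrightarrow> card (VC H) < 2^R"
    and big: "exc H0 - int (k - 1) * (2*R+2) \<ge> 1"
  shows "j \<le> k \<Longrightarrow> \<exists>Cs H. H \<subseteq> E \<and> md2 H \<and> exc H \<ge> exc H0 - int j * (2*R+2) \<and>
      (\<forall>i<j. is_cycle E ends (Cs i) \<and> Cs i \<inter> H = {}) \<and>
      (\<forall>i<j. \<forall>i'<j. i \<noteq> i' \<longrightarrow> Cs i \<inter> Cs i' = {})"
proof (induction j)
  case 0
  then show ?case using H0 by (intro exI[of _ "\<lambda>_. {}"] exI[of _ H0]) simp
next
  case (Suc j)
  then obtain Cs H where IH: "H \<subseteq> E" "md2 H" "exc H \<ge> exc H0 - int j * (2*R+2)"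
    "\<forall>i<j. is_cycle E ends (Cs i) \<and> Cs i \<inter> H = {}"
    "\<forall>i<j. \<forall>i'<j. i \<noteq> i' \<longrightarrow> Cs i \<inter> Cs i' = {}" by auto
  have "int j \<le> int (k - 1)" using Suc(2) by simp
  then have "int j * (2*R+2) \<le> int (k - 1) * (2*R+2)" by (simp add: mult_right_mono)
  then have e1: "exc H \<ge> 1" using IH(3) big by linarith
  obtain C H' where r: "C \<subseteq> H" "is_cycle E ends C" "H' \<subseteq> H - C" "md2 H'" "exc H' \<ge> exc H - (2*R+2)"
    using round[OF IH(1) IH(2) e1 b[OF IH(1)]] by blast
  define Cs' where "Cs' = Cs(j := C)"
  have a1: "H' \<subseteq> E" using r IH by blast
  have a2: "exc H' \<ge> exc H0 - int (Suc j) * (2*R+2)" using r(5) IH(3) by (simp add: algebra_simps)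
  have a3: "\<forall>i<Suc j. is_cycle E ends (Cs' i) \<and> Cs' i \<inter> H' = {}"
  proof (intro allI impI)
    fix i assume i: "i < Suc j"
    show "is_cycle E ends (Cs' i) \<and> Cs' i \<inter> H' = {}"
    proof (cases "i = j")
      case True then show ?thesis using r unfolding Cs'_def by auto
    next
      case False then have "i < j" using i by simp
      then show ?thesis using IH(4) r(3) unfolding Cs'_def by auto
    qed
  qed
  have a4: "\<forall>i<Suc j. \<forall>i'<Suc j. i \<noteq> i' \<longrightarrow> Cs' i \<inter> Cs' i' = {}"
  proof (intro allI impI)
    fix i i' assume ii: "i < Suc j" "i' < Suc j" "i \<noteq> i'"
    have cj: "\<And>i. i < j \<Longrightarrow> Cs i \<inter> C = {}" using IH(4) r(1) by blast
    show "Cs' i \<inter> Cs' i' = {}"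
    proof (cases "i = j")
      case True then have "i' < j" using ii by simp
      then show ?thesis using cj True unfolding Cs'_def by auto
    next
      case False then have ij: "i < j" using ii by simp
      show ?thesis
      proof (cases "i' = j")
        case True then show ?thesis using cj ij unfolding Cs'_def by auto
      next
        case False then have "i' < j" using ii by simp
        then show ?thesis using IH(5) ij ii(3) \<open>i \<noteq> j\<close> False unfolding Cs'_def by simp
      qed
    qed
  qed
  show ?case using a1 r(4) a2 a3 a4 by blast
qed



end


lemma sum_if_card: "finite A \<Longrightarrow> (\<Sum>x\<in>A. if P x then 1 else 0::nat) = card {x\<in>A. P x}"
  using sum.inter_filter[of A "\<lambda>_. 1::nat" P] by simp

theorem lemma8:
  fixes V :: "'v set" and E :: "'e set" and ends :: "'e \<Rightarrow> 'v set" and k :: nat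
  assumes "multigraph V E ends"
    and "k \<ge> 1"
    and "real (card E) \<ge> 42 * real k * log 2 (real k)"
    and "min_degree_ge V E ends 3"
  shows "\<exists>Cs :: nat \<Rightarrow> 'e set. (\<forall>i<k. is_cycle E ends (Cs i)) \<and>
           (\<forall>i<k. \<forall>j<k. i \<noteq> j \<longrightarrow> Cs i \<inter> Cs j = {})"
proof -
  have mg: "finite V" "V \<noteq> {}" "finite E" "\<And>e. e \<in> E \<Longrightarrow> ends e \<subseteq> V" "\<And>e. e \<in> E \<Longrightarrow> card (ends e) = 2"
    using assms(1) unfolding multigraph_def by auto
  interpret mgr E ends by unfold_locales (use mg in auto)
  define n where "n = card V"
  define m where "m = card E"
  have deg: "\<And>v. v \<in> V \<Longrightarrow> dg E v \<ge> 3" using assms(4) unfolding min_degree_ge_def degree_def dg_def by auto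
  have hs: "(\<Sum>v\<in>V. dg E v) = 2 * m"
  proof -
    have "(\<Sum>v\<in>V. dg E v) = (\<Sum>v\<in>V. \<Sum>e\<in>E. if v \<in> ends e then 1 else 0)"
      unfolding dg_def by (rule sum.cong[OF refl], rule sum_if_card[OF mg(3), symmetric])
    also have "\<dots> = (\<Sum>e\<in>E. \<Sum>v\<in>V. if v \<in> ends e then 1 else 0)" by (rule sum.swap)
    also have "\<dots> = (\<Sum>e\<in>E. card {v\<in>V. v \<in> ends e})"
      by (rule sum.cong[OF refl], rule sum_if_card[OF mg(1)])
    also have "\<dots> = (\<Sum>e\<in>E. 2)"
    proof (rule sum.cong)
      fix e assume "e \<in> E"
      then have "{v\<in>V. v \<in> ends e} = ends e" using mg(4) by auto
      then show "card {v\<in>V. v \<in> ends e} = 2" using mg(5) \<open>e \<in> E\<close> by simp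
    qed simp
    finally show ?thesis unfolding m_def by simp
  qed
  have "of_nat (card V) * 3 \<le> (\<Sum>v\<in>V. dg E v)" by (rule sum_bounded_below) (use deg in auto)
  then have mn: "3 * n \<le> 2 * m" using hs n_def by simp
  have n1: "n \<ge> 1" using mg(1,2) n_def by (simp add: Suc_leI card_gt_0_iff)
  have VCV: "\<And>H. H \<subseteq> E \<Longrightarrow> VC H \<subseteq> V" unfolding VC_def using mg(4) by blast
  have cVC: "\<And>H. H \<subseteq> E \<Longrightarrow> card (VC H) \<le> n" unfolding n_def using VCV mg(1) by (simp add: card_mono)
  define R where "R = (LEAST R. n < 2^R)"
  have ex: "n < 2^n" by (rule less_exp)
  have R1: "n < 2^R" unfolding R_def by (rule LeastI[of _ n]) (rule ex)
  have R2: "2^R \<le> 2*n"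
  proof (cases R)
    case 0 then show ?thesis using n1 by simp
  next
    case (Suc R')
    have "\<not> n < 2^R'" unfolding R_def
    proof
      assume "n < 2^R'"
      then have "R \<le> R'" unfolding R_def by (rule Least_le)
      then show False using Suc by simp
    qed
    then show ?thesis using Suc by simp
  qed
  have b: "\<And>H. H \<subseteq> E \<Longrightarrow> card (VC H) < 2^R"
  proof -
    fix H assume "H \<subseteq> E" then have "card (VC H) \<le> n" by (rule cVC)
    then show "card (VC H) < 2^R" using R1 by linarith
  qed
  have md: "md2 E" unfolding md2_def
  proof
    fix v assume "v \<in> VC E"
    then have "v \<in> V" using VCV[of E] by blast
    then have "dg E v \<ge> 3" by (rule deg)
    then show "dg E v \<ge> 2" by simp
  qed
  have lgm: "real m \<ge> 42 * real k * log 2 (real k)" using assms(3) unfolding m_def .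
  have "(k-1)*(2*R+2) + 1 \<le> m - n" by (rule arith[OF assms(2) n1 mn lgm R2])
  moreover have "n \<le> m" using mn by simp
  moreover have "exc E \<ge> int m - int n" unfolding exc_def m_def using cVC[of E] by simp
  ultimately have i1: "int ((k-1)*(2*R+2)) + 1 \<le> exc E" by linarith
  have "int ((k-1)*(2*R+2)) = int (k - 1) * (2*R+2)" by (simp add: ring_distribs)
  then have big: "exc E - int (k - 1) * (2*R+2) \<ge> 1" using i1 by linarith
  have "\<exists>Cs H. H \<subseteq> E \<and> md2 H \<and> exc H \<ge> exc E - int k * (2*R+2) \<and>
      (\<forall>i<k. is_cycle E ends (Cs i) \<and> Cs i \<inter> H = {}) \<and>
      (\<forall>i<k. \<forall>i'<k. i \<noteq> i' \<longrightarrow> Cs i \<inter> Cs i' = {})"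
    using iter[OF order_refl md b big, of k] by simp
  then obtain Cs H where r: "\<forall>i<k. is_cycle E ends (Cs i) \<and> Cs i \<inter> H = {}"
      "\<forall>i<k. \<forall>i'<k. i \<noteq> i' \<longrightarrow> Cs i \<inter> Cs i' = {}" by blast
  have "\<forall>i<k. is_cycle E ends (Cs i)" using r(1) by blast
  then show ?thesis using r(2) by blast
qed

end
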